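(* Let $(V,E)$ be a finite graph with $E\ne\emptyset$ and $p\in(0,1)$. Let $(\eta_t,\sigma_t)_{t\ge0}$ be a continuous-time Markov jump process on $\mathcal C$ with the following rates: (a) if $\sigma'=\sigma$ and there is $e\in E$ with $\eta'=\eta^e$ and $\gamma_\eta(e)=1$, then $c((\eta,\sigma),(\eta',\sigma'))=\big((1-p)\mathbf 1_{\eta(e)=1}+p\mathbf 1_{\eta(e)=0}\big)\mathbf 1_{(\eta,\sigma)\in\mathcal C}$; (b) if $\sigma'=\sigma$ and there is $e\in E$ with $\eta'=\eta^e$, $\gamma_\eta(e)=0$ and $\delta_\sigma(e)=1$, then $c((\eta,\sigma),(\eta',\sigma'))=\frac12\big((1-p)\mathbf 1_{\eta(e)=1}+p\mathbf 1_{\eta(e)=0}\big)\mathbf 1_{(\eta,\sigma)\in\mathcal C}$; (c) if there are $x\in V$ and $e\in E_x$ with $\eta'=\eta^e$, $\gamma_\eta(e)=0$, $\eta(e)=\delta_\sigma(e)$, and $\sigma'(y)=-\sigma(y)$ for the vertices $y$ connected to $x$ by an open path of $\eta$ not using $e$ (including $y=x$), $\sigma'(y)=\sigma(y)$ otherwise, then $c((\eta,\sigma),(\eta',\sigma'))=\frac14\big((1-p)\mathbf 1_{\eta(e)=1}\mathbf 1_{(\eta,\sigma)\in\mathcal C}+p\mathbf 1_{\eta(e)=0}\mathbf 1_{(\eta',\sigma')\in\mathcal C}\big)$; (d) all other off-diagonal rates are $0$. Then $(\eta_t,\sigma_t)_{t\ge0}$ is reversible with respect to $IP$; its edge marginal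 $(\eta_t)_{t\ge0}$ is a Markov jump process evolving according to the FK dynamics, i.e. with rates $\tilde c(\eta,\eta^e)=1-p$ if $\eta(e)=1$, $p$ if $\eta(e)=0$ and $\gamma_\eta(e)=1$, $p/2$ if $\eta(e)=0$ and $\gamma_\eta(e)=0$ (and $0$ for changes of two or more edges); and its spin marginal $(\sigma_t)_{t\ge0}$ is not a Markov jump process.
   Context: Edge configurations $\eta\in\{0,1\}^E$ (1 = open), spin configurations $\sigma\in\{-1,1\}^V$. For $e=\langle x,y\rangle$, $\delta_\sigma(e)=\mathbf 1_{\sigma(x)=\sigma(y)}$. $\mathcal C=\{(\eta,\sigma):\eta(e)\le\delta_\sigma(e)\ \forall e\in E\}$. $IP(\eta,\sigma)=\frac1Z\prod_{e\in E}\big(p\mathbf 1_{\eta(e)=1}\delta_\sigma(e)+(1-p)\mathbf 1_{\eta(e)=0}\big)$ with $Z$ the normalizing constant. $E_x$ is the set of edges with endvertex $x$; $\eta^e$ is $\eta$ with the value at $e$ changed. For $e=\langle x,y\rangle$, $\gamma_\eta(e)=1$ if $x,y$ are connected by a path of open edges of $\eta$ not using $e$, and $0$ otherwise. Reversibility w.r.t. $IP$ means $IP(a)c(a,b)=IP(b)c(b,a)$ for all states. A marginal process is a Markov jump process if it is a time-homogeneous Markov process for every initial distribution, with transition rates not depending on the initial distribution. *)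

theory Defs
  imports Complex_Main "HOL-Library.FuncSet"
begin

definition graph :: "'v set \<Rightarrow> 'v set set \<Rightarrow> bool" where
  "graph V E \<longleftrightarrow> finite V \<and> (\<forall>e\<in>E. \<exists>x y. x \<in> V \<and> y \<in> V \<and> x \<noteq> y \<and> e = {x, y})"

text \<open>An edge configuration eta is represented by the set of its open edges (a subset of E);
  a spin configuration is an element of V ->_E {-1,1}.\<close>
definition spins :: "'v set \<Rightarrow> ('v \<Rightarrow> int) set" where
  "spins V = (V \<rightarrow>\<^sub>E {-1, 1})"

definition delta :: "('v \<Rightarrow> int) \<Rightarrow> 'v set \<Rightarrow> bool" where
  "delta \<sigma> e \<longleftrightarrow> (\<forall>x\<in>e. \<forall>y\<in>e. \<sigma> x = \<sigma> y)"

definition conn :: "'v set set \<Rightarrow> 'v \<Rightarrow> 'v \<Rightarrow> bool" where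
  "conn F x y \<longleftrightarrow> (x, y) \<in> {(a, b). {a, b} \<in> F}\<^sup>*"

definition gamma :: "'v set set \<Rightarrow> 'v set \<Rightarrow> bool" where
  "gamma \<eta> e \<longleftrightarrow> (\<forall>x\<in>e. \<forall>y\<in>e. conn (\<eta> - {e}) x y)"

definition flipE :: "'v set set \<Rightarrow> 'v set \<Rightarrow> 'v set set" where
  "flipE \<eta> e = (if e \<in> \<eta> then \<eta> - {e} else insert e \<eta>)"

definition flipcl :: "'v set set \<Rightarrow> 'v set \<Rightarrow> 'v \<Rightarrow> ('v \<Rightarrow> int) \<Rightarrow> ('v \<Rightarrow> int)" where
  "flipcl \<eta> e x \<sigma> = (\<lambda>y. if conn (\<eta> - {e}) x y then - \<sigma> y else \<sigma> y)"

definition CS :: "'v set \<Rightarrow> 'v set set \<Rightarrow> ('v set set \<times> ('v \<Rightarrow> int)) set" where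
  "CS V E = {(\<eta>, \<sigma>). \<eta> \<subseteq> E \<and> \<sigma> \<in> spins V \<and> (\<forall>e\<in>\<eta>. delta \<sigma> e)}"

definition ipw :: "'v set set \<Rightarrow> real \<Rightarrow> ('v set set \<times> ('v \<Rightarrow> int)) \<Rightarrow> real" where
  "ipw E p s = (\<Prod>e\<in>E. (if e \<in> fst s then p * of_bool (delta (snd s) e) else 0)
                        + (if e \<notin> fst s then 1 - p else 0))"

definition IP :: "'v set \<Rightarrow> 'v set set \<Rightarrow> real \<Rightarrow> ('v set set \<times> ('v \<Rightarrow> int)) \<Rightarrow> real" where
  "IP V E p s = ipw E p s / (\<Sum>s'\<in>CS V E. ipw E p s')"

definition frate :: "real \<Rightarrow> 'v set set \<Rightarrow> 'v set \<Rightarrow> real" where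
  "frate p \<eta> e = (1 - p) * of_bool (e \<in> \<eta>) + p * of_bool (e \<notin> \<eta>)"

text \<open>Off-diagonal rates (a)-(d). The cases are mutually exclusive (the target state determines
  the edge e and, in case (c), the vertex x), so the rate is the sum of the contributions.\<close>
definition crate :: "'v set \<Rightarrow> 'v set set \<Rightarrow> real \<Rightarrow>
    ('v set set \<times> ('v \<Rightarrow> int)) \<Rightarrow> ('v set set \<times> ('v \<Rightarrow> int)) \<Rightarrow> real" where
  "crate V E p s s' = (let \<eta> = fst s; \<sigma> = snd s; \<eta>' = fst s'; \<sigma>' = snd s' in
     (\<Sum>e\<in>E.
        (if \<sigma>' = \<sigma> \<and> \<eta>' = flipE \<eta> e \<and> gamma \<eta> e
         then frate p \<eta> e * of_bool (s \<in> CS V E) else 0)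
      + (if \<sigma>' = \<sigma> \<and> \<eta>' = flipE \<eta> e \<and> \<not> gamma \<eta> e \<and> delta \<sigma> e
         then 1/2 * frate p \<eta> e * of_bool (s \<in> CS V E) else 0)
      + (\<Sum>x\<in>e. if x \<in> V \<and> \<eta>' = flipE \<eta> e \<and> \<not> gamma \<eta> e \<and> (e \<in> \<eta> \<longleftrightarrow> delta \<sigma> e)
                    \<and> \<sigma>' = flipcl \<eta> e x \<sigma>
                 then 1/4 * ((1 - p) * of_bool (e \<in> \<eta>) * of_bool (s \<in> CS V E)
                             + p * of_bool (e \<notin> \<eta>) * of_bool (s' \<in> CS V E))
                 else 0)))"

definition fk_rate :: "'v set set \<Rightarrow> real \<Rightarrow> 'v set set \<Rightarrow> 'v set set \<Rightarrow> real" where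
  "fk_rate E p \<eta> \<eta>' = (\<Sum>e\<in>E. if \<eta>' = flipE \<eta> e then
      (if e \<in> \<eta> then 1 - p else if gamma \<eta> e then p else p / 2) else 0)"

definition gen :: "'a set \<Rightarrow> ('a \<Rightarrow> 'a \<Rightarrow> real) \<Rightarrow> 'a \<Rightarrow> 'a \<Rightarrow> real" where
  "gen S r a b = (if a = b then - (\<Sum>c\<in>S - {a}. r a c) else r a b)"

fun qpow :: "'a set \<Rightarrow> ('a \<Rightarrow> 'a \<Rightarrow> real) \<Rightarrow> nat \<Rightarrow> 'a \<Rightarrow> 'a \<Rightarrow> real" where
  "qpow S Q 0 a b = (if a = b then 1 else 0)"
| "qpow S Q (Suc n) a b = (\<Sum>c\<in>S. qpow S Q n a c * Q c b)"

definition trans :: "'a set \<Rightarrow> ('a \<Rightarrow> 'a \<Rightarrow> real) \<Rightarrow> real \<Rightarrow> 'a \<Rightarrow> 'a \<Rightarrow> real" where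
  "trans S Q t a b = (\<Sum>n. t ^ n / fact n * qpow S Q n a b)"

fun chain :: "'a set \<Rightarrow> ('a \<Rightarrow> 'a \<Rightarrow> real) \<Rightarrow> 'a \<Rightarrow> real \<Rightarrow> (real \<times> 'a) list \<Rightarrow> real" where
  "chain S Q z s [] = 1"
| "chain S Q z s ((t, x) # rest) = trans S Q (t - s) z x * chain S Q x t rest"

text \<open>Finite-dimensional distribution: probability that X_{t_i} = x_i for all i,
  for 0 <= t_1 <= ... <= t_n, when X_0 has law mu.\<close>
definition fdd :: "'a set \<Rightarrow> ('a \<Rightarrow> 'a \<Rightarrow> real) \<Rightarrow> ('a \<Rightarrow> real) \<Rightarrow> (real \<times> 'a) list \<Rightarrow> real" where
  "fdd S Q \<mu> obs = (\<Sum>z\<in>S. \<mu> z * chain S Q z 0 obs)"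

definition distr :: "'a set \<Rightarrow> ('a \<Rightarrow> real) \<Rightarrow> bool" where
  "distr S \<mu> \<longleftrightarrow> (\<forall>x\<in>S. 0 \<le> \<mu> x) \<and> sum \<mu> S = 1"

definition valid_times :: "(real \<times> 'b) list \<Rightarrow> bool" where
  "valid_times obs \<longleftrightarrow> sorted (0 # map fst obs)"

definition marg_fdd :: "'a set \<Rightarrow> ('a \<Rightarrow> 'a \<Rightarrow> real) \<Rightarrow> ('a \<Rightarrow> 'b) \<Rightarrow> ('a \<Rightarrow> real)
    \<Rightarrow> (real \<times> 'b) list \<Rightarrow> real" where
  "marg_fdd S Q f \<mu> obs = (\<Sum>xs\<in>{xs. length xs = length obs \<and> set xs \<subseteq> S \<and> map f xs = map snd obs}.
       fdd S Q \<mu> (zip (map fst obs) xs))"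

definition push :: "'a set \<Rightarrow> ('a \<Rightarrow> 'b) \<Rightarrow> ('a \<Rightarrow> real) \<Rightarrow> 'b \<Rightarrow> real" where
  "push S f \<mu> y = (\<Sum>x\<in>{x\<in>S. f x = y}. \<mu> x)"

definition marginal_mjp_with :: "'a set \<Rightarrow> ('a \<Rightarrow> 'a \<Rightarrow> real) \<Rightarrow> ('a \<Rightarrow> 'b) \<Rightarrow> 'b set
    \<Rightarrow> ('b \<Rightarrow> 'b \<Rightarrow> real) \<Rightarrow> bool" where
  "marginal_mjp_with S Q f T r \<longleftrightarrow>
     (\<forall>\<mu> obs. distr S \<mu> \<longrightarrow> valid_times obs \<longrightarrow> set (map snd obs) \<subseteq> T \<longrightarrow>
        marg_fdd S Q f \<mu> obs = fdd T (gen T r) (push S f \<mu>) obs)"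

definition marginal_is_mjp :: "'a set \<Rightarrow> ('a \<Rightarrow> 'a \<Rightarrow> real) \<Rightarrow> ('a \<Rightarrow> 'b) \<Rightarrow> 'b set \<Rightarrow> bool" where
  "marginal_is_mjp S Q f T \<longleftrightarrow>
     (\<exists>r. (\<forall>a\<in>T. \<forall>b\<in>T. a \<noteq> b \<longrightarrow> 0 \<le> r a b) \<and> marginal_mjp_with S Q f T r)"

definition reversible :: "'a set \<Rightarrow> ('a \<Rightarrow> real) \<Rightarrow> ('a \<Rightarrow> 'a \<Rightarrow> real) \<Rightarrow> bool" where
  "reversible S \<pi> c \<longleftrightarrow> (\<forall>a\<in>S. \<forall>b\<in>S. \<pi> a * c a b = \<pi> b * c b a)"

end

theory Submission
  imports Defs
begin


lemma qpow_bound: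
  assumes S: "finite S" and b: "b \<in> S"
  shows "\<bar>qpow S Q n a b\<bar> \<le> (\<Sum>c\<in>S. \<Sum>d\<in>S. \<bar>Q c d\<bar>) ^ n"
  using b
proof (induction n arbitrary: b)
  case 0 then show ?case by simp
next
  case (Suc n)
  let ?K = "\<Sum>c\<in>S. \<Sum>d\<in>S. \<bar>Q c d\<bar>"
  have K0: "0 \<le> ?K" by (intro sum_nonneg) auto
  have "\<bar>qpow S Q (Suc n) a b\<bar> \<le> (\<Sum>c\<in>S. \<bar>qpow S Q n a c\<bar> * \<bar>Q c b\<bar>)"
    by (simp add: abs_mult[symmetric] sum_abs)
  also have "\<dots> \<le> (\<Sum>c\<in>S. ?K^n * \<bar>Q c b\<bar>)"
    by (rule sum_mono, rule mult_right_mono, auto simp: Suc.IH)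
  also have "\<dots> = ?K^n * (\<Sum>c\<in>S. \<bar>Q c b\<bar>)" by (simp add: sum_distrib_left)
  also have "\<dots> \<le> ?K^n * ?K"
  proof (rule mult_left_mono)
    show "(\<Sum>c\<in>S. \<bar>Q c b\<bar>) \<le> ?K"
      by (rule sum_mono) (rule member_le_sum[OF Suc.prems], auto simp: S)
  qed (use K0 in simp)
  finally show ?case by (simp add: mult.commute)
qed

lemma trans_summable:
  assumes S: "finite S" and b: "b \<in> S"
  shows "summable (\<lambda>n. t ^ n / fact n * qpow S Q n a b)"
proof -
  let ?K = "\<Sum>c\<in>S. \<Sum>d\<in>S. \<bar>Q c d\<bar>"
  have "summable (\<lambda>n. inverse (fact n) * (\<bar>t\<bar> * ?K)^n)" by (rule summable_exp)
  moreover have "norm (t ^ n / fact n * qpow S Q n a b) \<le> inverse (fact n) * (\<bar>t\<bar> * ?K)^n" for n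
  proof -
    have "norm (t ^ n / fact n * qpow S Q n a b) = inverse (fact n) * (\<bar>t\<bar>^n * \<bar>qpow S Q n a b\<bar>)"
      by (simp add: abs_mult power_abs divide_inverse)
    also have "\<dots> \<le> inverse (fact n) * (\<bar>t\<bar>^n * ?K^n)"
      by (intro mult_left_mono qpow_bound S b) auto
    finally show ?thesis by (simp add: power_mult_distrib)
  qed
  ultimately show ?thesis by (rule summable_comparison_test'[where N=0])
qed

locale lumpable =
  fixes S :: "'a set" and T :: "'b set" and f :: "'a \<Rightarrow> 'b" and Q :: "'a \<Rightarrow> 'a \<Rightarrow> real" and Qh :: "'b \<Rightarrow> 'b \<Rightarrow> real"
  assumes S: "finite S" and T: "finite T" and fST: "f ` S \<subseteq> T"
    and lump: "\<And>c b. c \<in> S \<Longrightarrow> b \<in> T \<Longrightarrow> (\<Sum>s\<in>{s\<in>S. f s = b}. Q c s) = Qh (f c) b"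
begin

lemma lump_qpow:
  assumes "a \<in> S" "b \<in> T"
  shows "(\<Sum>s\<in>{s\<in>S. f s = b}. qpow S Q n a s) = qpow T Qh n (f a) b"
  using assms(2)
proof (induction n arbitrary: b)
  case 0
  have fin: "finite {s\<in>S. f s = b}" using S by simp
  have "(\<Sum>s\<in>{s\<in>S. f s = b}. qpow S Q 0 a s) = (\<Sum>s\<in>{s\<in>S. f s = b}. if a = s then 1 else 0)"
    by simp
  also have "\<dots> = (if a \<in> {s\<in>S. f s = b} then 1 else 0)" by (rule sum.delta'[OF fin])
  finally show ?case using assms(1) by simp
next
  case (Suc n)
  have "(\<Sum>s\<in>{s\<in>S. f s = b}. qpow S Q (Suc n) a s)
     = (\<Sum>c\<in>S. qpow S Q n a c * (\<Sum>s\<in>{s\<in>S. f s = b}. Q c s))"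
    by (simp add: sum_distrib_left sum.swap[of _ S])
  also have "\<dots> = (\<Sum>c\<in>S. qpow S Q n a c * Qh (f c) b)"
    by (rule sum.cong) (auto simp: lump Suc.prems)
  also have "\<dots> = (\<Sum>d\<in>T. \<Sum>c\<in>{c\<in>S. f c = d}. qpow S Q n a c * Qh (f c) b)"
    by (rule sum.group[symmetric, OF S T fST])
  also have "\<dots> = (\<Sum>d\<in>T. (\<Sum>c\<in>{c\<in>S. f c = d}. qpow S Q n a c) * Qh d b)"
    by (simp add: sum_distrib_right)
  also have "\<dots> = (\<Sum>d\<in>T. qpow T Qh n (f a) d * Qh d b)"
    by (rule sum.cong) (auto simp: Suc.IH)
  finally show ?case by simp
qed

lemma lump_trans:
  assumes "a \<in> S" "b \<in> T"
  shows "(\<Sum>s\<in>{s\<in>S. f s = b}. trans S Q t a s) = trans T Qh t (f a) b"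
proof -
  have "(\<Sum>s\<in>{s\<in>S. f s = b}. trans S Q t a s)
      = (\<Sum>n. \<Sum>s\<in>{s\<in>S. f s = b}. t ^ n / fact n * qpow S Q n a s)"
    unfolding trans_def
    apply (rule suminf_sum[symmetric]) apply (rule trans_summable[OF S]) by auto
  also have "\<dots> = (\<Sum>n. t ^ n / fact n * qpow T Qh n (f a) b)"
  proof (rule arg_cong[where f=suminf], rule ext)
    fix n
    have "(\<Sum>s\<in>{s\<in>S. f s = b}. t ^ n / fact n * qpow S Q n a s)
       = t ^ n / fact n * (\<Sum>s\<in>{s\<in>S. f s = b}. qpow S Q n a s)"
      by (rule sum_distrib_left[symmetric])
    then show "(\<Sum>s\<in>{s\<in>S. f s = b}. t ^ n / fact n * qpow S Q n a s)
       = t ^ n / fact n * qpow T Qh n (f a) b" by (simp only: lump_qpow assms)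
  qed
  finally show ?thesis by (simp add: trans_def)
qed

definition lifts :: "(real \<times> 'b) list \<Rightarrow> 'a list set" where
  "lifts obs = {xs. length xs = length obs \<and> set xs \<subseteq> S \<and> map f xs = map snd obs}"

lemma finite_lifts: "finite (lifts obs)"
  by (rule finite_subset[OF _ finite_lists_length_eq[OF S, of "length obs"]])
     (auto simp: lifts_def)

lemma lifts_Cons: "lifts ((t, y) # rest) = (\<lambda>(x, xs). x # xs) ` ({x\<in>S. f x = y} \<times> lifts rest)"
  by (auto simp: lifts_def length_Suc_conv image_iff)

lemma lump_chain:
  assumes "z \<in> S" "set (map snd obs) \<subseteq> T"
  shows "(\<Sum>xs\<in>lifts obs. chain S Q z s (zip (map fst obs) xs)) = chain T Qh (f z) s obs"
  using assms
proof (induction obs arbitrary: z s)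
  case Nil
  have "lifts [] = {[]}" by (auto simp: lifts_def)
  then show ?case by simp
next
  case (Cons o1 rest)
  obtain t y where o1: "o1 = (t, y)" by force
  have inj: "inj_on (\<lambda>(x, xs). x # xs) ({x\<in>S. f x = y} \<times> lifts rest)"
    by (auto simp: inj_on_def)
  have "(\<Sum>xs\<in>lifts (o1 # rest). chain S Q z s (zip (map fst (o1 # rest)) xs))
     = (\<Sum>x\<in>{x\<in>S. f x = y}. \<Sum>xs\<in>lifts rest. trans S Q (t - s) z x * chain S Q x t (zip (map fst rest) xs))"
    unfolding o1 lifts_Cons sum.reindex[OF inj] 
    by (simp add: sum.cartesian_product split_def)
  also have "\<dots> = (\<Sum>x\<in>{x\<in>S. f x = y}. trans S Q (t - s) z x * chain T Qh y t rest)"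
    using Cons.prems by (intro sum.cong refl) (auto simp: sum_distrib_left[symmetric] Cons.IH o1)
  also have "\<dots> = trans T Qh (t - s) (f z) y * chain T Qh y t rest"
    using Cons.prems by (simp add: sum_distrib_right[symmetric] lump_trans o1)
  finally show ?case by (simp add: o1)
qed

lemma lump_fdd:
  assumes "set (map snd obs) \<subseteq> T"
  shows "marg_fdd S Q f \<mu> obs = fdd T Qh (push S f \<mu>) obs"
proof -
  have "marg_fdd S Q f \<mu> obs = (\<Sum>z\<in>S. \<mu> z * (\<Sum>xs\<in>lifts obs. chain S Q z 0 (zip (map fst obs) xs)))"
    unfolding marg_fdd_def fdd_def lifts_def[symmetric]
    by (simp add: sum_distrib_left sum.swap[of _ "lifts obs"])
  also have "\<dots> = (\<Sum>z\<in>S. \<mu> z * chain T Qh (f z) 0 obs)"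
    using assms by (intro sum.cong refl) (simp add: lump_chain)
  also have "\<dots> = (\<Sum>b\<in>T. \<Sum>z\<in>{z\<in>S. f z = b}. \<mu> z * chain T Qh (f z) 0 obs)"
    by (rule sum.group[symmetric, OF S T fST])
  also have "\<dots> = fdd T Qh (push S f \<mu>) obs"
    unfolding fdd_def push_def by (simp add: sum_distrib_right)
  finally show ?thesis .
qed

end


lemma conn_refl[simp]: "conn F x x"
  by (simp add: conn_def)

lemma conn_sym: "conn F x y \<Longrightarrow> conn F y x"
proof -
  have "sym {(a, b). {a, b} \<in> F}" by (auto simp: sym_def insert_commute)
  then have "sym ({(a, b). {a, b} \<in> F}\<^sup>*)" by (rule sym_rtrancl)
  then show "conn F x y \<Longrightarrow> conn F y x" unfolding conn_def by (auto dest: symD)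
qed

lemma conn_step: "conn F x a \<Longrightarrow> {a, b} \<in> F \<Longrightarrow> conn F x b"
  unfolding conn_def by (rule rtrancl_into_rtrancl) auto

lemma conn_step_iff: "{a, b} \<in> F \<Longrightarrow> conn F x a \<longleftrightarrow> conn F x b"
  by (metis conn_step insert_commute)

lemma conn_const:
  assumes "conn F x y" "\<forall>f\<in>F. delta \<sigma> f"
  shows "\<sigma> x = \<sigma> y"
  using assms(1) unfolding conn_def
proof (induction rule: rtrancl_induct)
  case base then show ?case by simp
next
  case (step a b)
  then show ?case using assms(2) by (auto simp: delta_def)
qed

lemma graph_edge: "graph V E \<Longrightarrow> e \<in> E \<Longrightarrow> \<exists>u w. u \<in> V \<and> w \<in> V \<and> u \<noteq> w \<and> e = {u, w}"
  by (auto simp: graph_def)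

lemma graph_E_sub: "graph V E \<Longrightarrow> e \<in> E \<Longrightarrow> e \<subseteq> V"
  by (auto simp: graph_def)

lemma conn_V:
  assumes "graph V E" "F \<subseteq> E" "conn F x y" "x \<in> V"
  shows "y \<in> V"
  using assms(3) unfolding conn_def
proof (induction rule: rtrancl_induct)
  case base then show ?case using assms(4) by simp
next
  case (step a b)
  then have "{a, b} \<in> E" using assms(2) by auto
  then show ?case using graph_E_sub[OF assms(1)] by auto
qed

lemma conn_empty[simp]: "conn {} x y \<longleftrightarrow> x = y"
  by (simp add: conn_def)

lemma delta_uw[simp]: "delta \<sigma> {u, w} \<longleftrightarrow> \<sigma> u = \<sigma> w"
  by (auto simp: delta_def)

lemma gamma_uw: "gamma \<eta> {u, w} \<longleftrightarrow> conn (\<eta> - {{u, w}}) u w"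
  by (auto simp: gamma_def intro: conn_sym)

lemma flipE_inj: "flipE \<eta> e = flipE \<eta> e' \<Longrightarrow> e = e'"
  unfolding flipE_def by (auto split: if_splits)

lemma flipE_invol[simp]: "flipE (flipE \<eta> e) e = \<eta>"
  unfolding flipE_def by auto

lemma flipE_neq[simp]: "flipE \<eta> e \<noteq> \<eta>"
  unfolding flipE_def by auto

lemma flipE_minus[simp]: "flipE \<eta> e - {e} = \<eta> - {e}"
  unfolding flipE_def by auto

lemma flipE_mem: "f \<noteq> e \<Longrightarrow> f \<in> flipE \<eta> e \<longleftrightarrow> f \<in> \<eta>"
  unfolding flipE_def by auto

lemma flipE_mem_e[simp]: "e \<in> flipE \<eta> e \<longleftrightarrow> e \<notin> \<eta>"
  unfolding flipE_def by auto

lemma flipcl_flipE[simp]: "flipcl (flipE \<eta> e) e = flipcl \<eta> e"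
  unfolding flipcl_def by (rule ext)+ simp

lemma flipcl_invol: "flipcl \<eta> e x (flipcl \<eta> e x \<sigma>) = \<sigma>"
  unfolding flipcl_def by auto

lemma flipcl_eq_iff: "\<sigma>' = flipcl \<eta> e x \<sigma> \<longleftrightarrow> \<sigma> = flipcl \<eta> e x \<sigma>'"
  using flipcl_invol by metis

lemma spins_val: "\<sigma> \<in> spins V \<Longrightarrow> x \<in> V \<Longrightarrow> \<sigma> x = -1 \<or> \<sigma> x = 1"
  by (auto simp: spins_def PiE_def Pi_def)

lemma CS_iff: "(\<eta>, \<sigma>) \<in> CS V E \<longleftrightarrow> \<eta> \<subseteq> E \<and> \<sigma> \<in> spins V \<and> (\<forall>e\<in>\<eta>. delta \<sigma> e)"
  by (simp add: CS_def)

lemma flipcl_spins: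
  assumes "graph V E" "\<eta> \<subseteq> E" "\<sigma> \<in> spins V" "x \<in> V"
  shows "flipcl \<eta> e x \<sigma> \<in> spins V"
proof -
  have "y \<notin> V \<Longrightarrow> \<not> conn (\<eta> - {e}) x y" for y
    using conn_V[OF assms(1) _ _ assms(4), of "\<eta> - {e}"] assms(2) by blast
  then show ?thesis using assms(3) spins_val[OF assms(3)]
    by (auto simp: spins_def flipcl_def PiE_def Pi_def extensional_def)
qed

lemma flipcl_compat:
  assumes "graph V E" "\<eta> \<subseteq> E" "\<forall>f\<in>\<eta>. delta \<sigma> f" "f \<in> \<eta> - {e}"
  shows "delta (flipcl \<eta> e x \<sigma>) f"
proof -
  obtain a b where ab: "f = {a, b}" using graph_edge[OF assms(1)] assms(2,4) by blast
  have "\<sigma> a = \<sigma> b" using assms(3,4) ab by auto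
  moreover have "conn (\<eta> - {e}) x a \<longleftrightarrow> conn (\<eta> - {e}) x b"
    using conn_step_iff assms(4) ab by metis
  ultimately show ?thesis using ab by (simp add: flipcl_def)
qed

lemma CS_remove: "(\<eta>, \<sigma>) \<in> CS V E \<Longrightarrow> (\<eta> - {e}, \<sigma>) \<in> CS V E"
  by (auto simp: CS_iff)

lemma CS_remove_fl:
  assumes "graph V E" "(\<eta>, \<sigma>) \<in> CS V E" "x \<in> V"
  shows "(\<eta> - {e}, flipcl \<eta> e x \<sigma>) \<in> CS V E"
  using assms flipcl_spins[OF assms(1)] flipcl_compat[OF assms(1)] by (auto simp: CS_iff)

lemma CS_add: "(\<eta>, \<sigma>) \<in> CS V E \<Longrightarrow> e \<in> E \<Longrightarrow> delta \<sigma> e \<Longrightarrow> (insert e \<eta>, \<sigma>) \<in> CS V E"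
  by (auto simp: CS_iff)

lemma flipcl_self: "flipcl \<eta> e x \<sigma> x = - \<sigma> x"
  by (simp add: flipcl_def)

lemma flipcl_other: "\<not> conn (\<eta> - {e}) x w \<Longrightarrow> flipcl \<eta> e x \<sigma> w = \<sigma> w"
  by (simp add: flipcl_def)

lemma CS_add_fl:
  assumes "graph V E" "(\<eta>, \<sigma>) \<in> CS V E" "{x, w} \<in> E" "{x, w} \<notin> \<eta>"
    "\<not> conn (\<eta> - {{x, w}}) x w" "\<sigma> x \<noteq> \<sigma> w"
  shows "(insert {x, w} \<eta>, flipcl \<eta> {x, w} x \<sigma>) \<in> CS V E"
proof -
  have xw: "x \<in> V" "w \<in> V" using graph_E_sub[OF assms(1,3)] by auto
  have "\<sigma> \<in> spins V" using assms(2) by (simp add: CS_iff)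
  then have "\<sigma> x = -1 \<or> \<sigma> x = 1" "\<sigma> w = -1 \<or> \<sigma> w = 1" using spins_val[OF _ xw(1)] spins_val[OF _ xw(2)] by blast+
  then have "- \<sigma> x = \<sigma> w" using assms(6) by auto
  then have "delta (flipcl \<eta> {x, w} x \<sigma>) {x, w}"
    using assms(5) by (simp add: flipcl_self flipcl_other)
  moreover have "(\<eta> - {{x,w}}, flipcl \<eta> {x, w} x \<sigma>) \<in> CS V E"
    by (rule CS_remove_fl[OF assms(1,2) xw(1)])
  ultimately show ?thesis using assms(3,4) by (auto simp: CS_iff)
qed

definition cterm :: "'v set \<Rightarrow> 'v set set \<Rightarrow> real \<Rightarrow>
    ('v set set \<times> ('v \<Rightarrow> int)) \<Rightarrow> ('v set set \<times> ('v \<Rightarrow> int)) \<Rightarrow> 'v set \<Rightarrow> real" where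
  "cterm V E p s s' e = (let \<eta> = fst s; \<sigma> = snd s; \<eta>' = fst s'; \<sigma>' = snd s' in
        (if \<sigma>' = \<sigma> \<and> \<eta>' = flipE \<eta> e \<and> gamma \<eta> e
         then frate p \<eta> e * of_bool (s \<in> CS V E) else 0)
      + (if \<sigma>' = \<sigma> \<and> \<eta>' = flipE \<eta> e \<and> \<not> gamma \<eta> e \<and> delta \<sigma> e
         then 1/2 * frate p \<eta> e * of_bool (s \<in> CS V E) else 0)
      + (\<Sum>x\<in>e. if x \<in> V \<and> \<eta>' = flipE \<eta> e \<and> \<not> gamma \<eta> e \<and> (e \<in> \<eta> \<longleftrightarrow> delta \<sigma> e)
                    \<and> \<sigma>' = flipcl \<eta> e x \<sigma>
                 then 1/4 * ((1 - p) * of_bool (e \<in> \<eta>) * of_bool (s \<in> CS V E)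
                             + p * of_bool (e \<notin> \<eta>) * of_bool (s' \<in> CS V E))
                 else 0))"

lemma crate_cterm: "crate V E p s s' = (\<Sum>e\<in>E. cterm V E p s s' e)"
  unfolding crate_def cterm_def Let_def by simp

lemma cterm_zero: "fst s' \<noteq> flipE (fst s) e \<Longrightarrow> cterm V E p s s' e = 0"
  unfolding cterm_def Let_def by simp

lemma finite_E: "graph V E \<Longrightarrow> finite E"
  by (rule finite_subset[of E "Pow V"]) (auto simp: graph_def)

lemma crate_single:
  assumes "graph V E" "e \<in> E" "fst s' = flipE (fst s) e"
  shows "crate V E p s s' = cterm V E p s s' e"
proof -
  have "crate V E p s s' = cterm V E p s s' e + (\<Sum>e'\<in>E - {e}. cterm V E p s s' e')"
    unfolding crate_cterm using sum.remove[OF finite_E[OF assms(1)] assms(2)] by blast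
  also have "(\<Sum>e'\<in>E - {e}. cterm V E p s s' e') = 0"
  proof (intro sum.neutral ballI)
    fix e' assume "e' \<in> E - {e}"
    then have "fst s' \<noteq> flipE (fst s) e'" using assms(3) flipE_inj by blast
    then show "cterm V E p s s' e' = 0" by (rule cterm_zero)
  qed
  finally show ?thesis by simp
qed

lemma crate_none:
  assumes "\<forall>e\<in>E. fst s' \<noteq> flipE (fst s) e"
  shows "crate V E p s s' = 0"
  unfolding crate_cterm using assms by (simp add: cterm_zero)

lemma sum_two: "u \<noteq> w \<Longrightarrow> (\<Sum>x\<in>{u, w}. g x) = g u + (g w :: real)"
  by simp

lemma cterm_uw:
  assumes "u \<noteq> w"
  shows "cterm V E p (\<eta>, \<sigma>) (flipE \<eta> {u, w}, \<sigma>') {u, w} =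
    (if \<sigma>' = \<sigma> \<and> conn (\<eta> - {{u, w}}) u w then frate p \<eta> {u, w} * of_bool ((\<eta>, \<sigma>) \<in> CS V E) else 0)
  + (if \<sigma>' = \<sigma> \<and> \<not> conn (\<eta> - {{u, w}}) u w \<and> \<sigma> u = \<sigma> w
     then 1/2 * frate p \<eta> {u, w} * of_bool ((\<eta>, \<sigma>) \<in> CS V E) else 0)
  + (if u \<in> V \<and> \<not> conn (\<eta> - {{u, w}}) u w \<and> ({u, w} \<in> \<eta> \<longleftrightarrow> \<sigma> u = \<sigma> w)
        \<and> \<sigma>' = flipcl \<eta> {u, w} u \<sigma>
     then 1/4 * ((1 - p) * of_bool ({u, w} \<in> \<eta>) * of_bool ((\<eta>, \<sigma>) \<in> CS V E)
                 + p * of_bool ({u, w} \<notin> \<eta>) * of_bool ((flipE \<eta> {u, w}, \<sigma>') \<in> CS V E)) else 0)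
  + (if w \<in> V \<and> \<not> conn (\<eta> - {{u, w}}) u w \<and> ({u, w} \<in> \<eta> \<longleftrightarrow> \<sigma> u = \<sigma> w)
        \<and> \<sigma>' = flipcl \<eta> {u, w} w \<sigma>
     then 1/4 * ((1 - p) * of_bool ({u, w} \<in> \<eta>) * of_bool ((\<eta>, \<sigma>) \<in> CS V E)
                 + p * of_bool ({u, w} \<notin> \<eta>) * of_bool ((flipE \<eta> {u, w}, \<sigma>') \<in> CS V E)) else 0)"
  unfolding cterm_def Let_def gamma_uw fst_conv snd_conv delta_uw sum_two[OF assms]
  by (simp only: simp_thms add.assoc)


lemma ipw_CS:
  assumes "(\<eta>, \<sigma>) \<in> CS V E"
  shows "ipw E p (\<eta>, \<sigma>) = (\<Prod>f\<in>E. if f \<in> \<eta> then p else 1 - p)"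
  unfolding ipw_def using assms by (intro prod.cong) (auto simp: CS_iff)

lemma flip_delta:
  assumes "\<sigma> \<in> spins V" "u \<in> V" "w \<in> V" "\<not> conn F u w" "\<sigma>' = (\<lambda>y. if conn F u y then - \<sigma> y else \<sigma> y)"
  shows "\<sigma>' u = \<sigma>' w \<longleftrightarrow> \<sigma> u \<noteq> \<sigma> w"
proof -
  have "\<sigma> u = -1 \<or> \<sigma> u = 1" "\<sigma> w = -1 \<or> \<sigma> w = 1"
    using spins_val[OF assms(1) assms(2)] spins_val[OF assms(1) assms(3)] by blast+
  then show ?thesis using assms(4,5) by auto
qed

lemma rev_pair:
  assumes G: "graph V E" and a: "(\<eta>, \<sigma>) \<in> CS V E" and b: "(\<eta>', \<sigma>') \<in> CS V E"
  shows "ipw E p (\<eta>, \<sigma>) * crate V E p (\<eta>, \<sigma>) (\<eta>', \<sigma>')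
       = ipw E p (\<eta>', \<sigma>') * crate V E p (\<eta>', \<sigma>') (\<eta>, \<sigma>)"
proof (cases "\<exists>e\<in>E. \<eta>' = flipE \<eta> e")
  case False
  then have "\<forall>e\<in>E. \<eta> \<noteq> flipE \<eta>' e" by (metis flipE_invol)
  then show ?thesis using False by (simp add: crate_none)
next
  case True
  then obtain e where e: "e \<in> E" "\<eta>' = flipE \<eta> e" by blast
  obtain u w where uw: "u \<in> V" "w \<in> V" "u \<noteq> w" "e = {u, w}" using graph_edge[OF G e(1)] by blast
  have c1: "crate V E p (\<eta>, \<sigma>) (\<eta>', \<sigma>') = cterm V E p (\<eta>, \<sigma>) (flipE \<eta> {u, w}, \<sigma>') {u, w}"
    using crate_single[OF G e(1)] e uw by simp
  have c2: "crate V E p (\<eta>', \<sigma>') (\<eta>, \<sigma>)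
      = cterm V E p (flipE \<eta> {u, w}, \<sigma>') (flipE (flipE \<eta> {u, w}) {u, w}, \<sigma>) {u, w}"
    using crate_single[OF G e(1)] e uw by simp
  let ?W = "\<Prod>f\<in>E - {e}. if f \<in> \<eta> then p else 1 - p"
  have w1: "ipw E p (\<eta>, \<sigma>) = (if e \<in> \<eta> then p else 1 - p) * ?W"
    unfolding ipw_CS[OF a] by (subst prod.remove[OF finite_E[OF G] e(1)]) simp
  have "ipw E p (\<eta>', \<sigma>') = (if e \<in> \<eta>' then p else 1 - p) * (\<Prod>f\<in>E - {e}. if f \<in> \<eta>' then p else 1 - p)"
    unfolding ipw_CS[OF b] by (subst prod.remove[OF finite_E[OF G] e(1)]) simp
  also have "(\<Prod>f\<in>E - {e}. if f \<in> \<eta>' then p else 1 - p) = ?W"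
    using e(2) by (intro prod.cong) (auto simp: flipE_mem)
  finally have w2: "ipw E p (\<eta>', \<sigma>') = (if e \<in> \<eta> then 1 - p else p) * ?W" using e(2) by simp
  have bCS: "(flipE \<eta> {u, w}, \<sigma>') \<in> CS V E" using b e uw by simp
  have sa: "\<sigma> \<in> spins V" and sb: "\<sigma>' \<in> spins V" using a b by (auto simp: CS_iff)
  let ?F = "\<eta> - {{u, w}}"
  have fl1: "\<sigma>' = flipcl \<eta> {u, w} u \<sigma> \<Longrightarrow> \<not> conn ?F u w \<Longrightarrow> (\<sigma>' u = \<sigma>' w \<longleftrightarrow> \<sigma> u \<noteq> \<sigma> w)"
    using flip_delta[OF sa uw(1,2)] by (simp add: flipcl_def)
  have fl2: "\<sigma>' = flipcl \<eta> {u, w} w \<sigma> \<Longrightarrow> \<not> conn ?F u w \<Longrightarrow> (\<sigma>' u = \<sigma>' w \<longleftrightarrow> \<sigma> u \<noteq> \<sigma> w)"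
    using flip_delta[OF sa uw(2,1), of ?F] conn_sym[of ?F w u] by (auto simp: flipcl_def)
  let ?g = "conn ?F u w"
  let ?A = "{u, w} \<in> \<eta>"
  have C2: "(\<sigma> = \<sigma>' \<and> \<not> ?g \<and> \<sigma>' u = \<sigma>' w) \<longleftrightarrow> (\<sigma>' = \<sigma> \<and> \<not> ?g \<and> \<sigma> u = \<sigma> w)"
    by auto
  have C1: "(\<sigma> = \<sigma>' \<and> ?g) \<longleftrightarrow> (\<sigma>' = \<sigma> \<and> ?g)" by auto
  have C3: "(u \<in> V \<and> \<not> ?g \<and> (\<not> ?A \<longleftrightarrow> \<sigma>' u = \<sigma>' w) \<and> \<sigma> = flipcl \<eta> {u, w} u \<sigma>')
      \<longleftrightarrow> (u \<in> V \<and> \<not> ?g \<and> (?A \<longleftrightarrow> \<sigma> u = \<sigma> w) \<and> \<sigma>' = flipcl \<eta> {u, w} u \<sigma>)"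
    using fl1 flipcl_eq_iff[of \<sigma>' \<eta> "{u,w}" u \<sigma>] by blast
  have C4: "(w \<in> V \<and> \<not> ?g \<and> (\<not> ?A \<longleftrightarrow> \<sigma>' u = \<sigma>' w) \<and> \<sigma> = flipcl \<eta> {u, w} w \<sigma>')
      \<longleftrightarrow> (w \<in> V \<and> \<not> ?g \<and> (?A \<longleftrightarrow> \<sigma> u = \<sigma> w) \<and> \<sigma>' = flipcl \<eta> {u, w} w \<sigma>)"
    using fl2 flipcl_eq_iff[of \<sigma>' \<eta> "{u,w}" w \<sigma>] by blast
  have T: "\<And>C K1 K2. (if ?A then p else 1 - p) * K1 = (if ?A then 1 - p else p) * K2 \<Longrightarrow>
     (if ?A then p else 1 - p) * (if C then K1 else 0) = (if ?A then 1 - p else p) * (if C then K2 else 0)"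
    by simp
  have key: "(if ?A then p else 1 - p) * cterm V E p (\<eta>, \<sigma>) (flipE \<eta> {u, w}, \<sigma>') {u, w}
     = (if ?A then 1 - p else p) * cterm V E p (flipE \<eta> {u, w}, \<sigma>') (flipE (flipE \<eta> {u, w}) {u, w}, \<sigma>) {u, w}"
    apply (unfold cterm_uw[OF uw(3), of V E p "flipE \<eta> {u, w}" \<sigma>' "\<sigma>"])
    apply (unfold cterm_uw[OF uw(3), of V E p \<eta> \<sigma> \<sigma>'])
    apply (unfold flipE_minus flipcl_flipE flipE_mem_e flipE_invol C1 C2 C3 C4)
    apply (simp only: a bCS of_bool_eq(2) mult_1_right simp_thms distrib_left)
    apply (intro arg_cong2[where f="(+)"] T)
    by (cases ?A; simp add: frate_def algebra_simps)+
  show ?thesis unfolding c1 c2 w1 w2 using key by (simp add: uw(4) algebra_simps)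
qed

lemma reversible_part:
  assumes G: "graph V E"
  shows "reversible (CS V E) (IP V E p) (crate V E p)"
  unfolding reversible_def IP_def
proof (intro ballI)
  fix s s' assume "s \<in> CS V E" "s' \<in> CS V E"
  moreover obtain \<eta> \<sigma> \<eta>' \<sigma>' where "s = (\<eta>, \<sigma>)" "s' = (\<eta>', \<sigma>')" by force
  ultimately have "ipw E p s * crate V E p s s' = ipw E p s' * crate V E p s' s"
    using rev_pair[OF G] by simp
  then show "ipw E p s / (\<Sum>s'\<in>CS V E. ipw E p s') * crate V E p s s' =
           ipw E p s' / (\<Sum>s'\<in>CS V E. ipw E p s') * crate V E p s' s"
    by (simp add: divide_simps)
qed


lemma fk_single:
  assumes G: "graph V E" and e: "e \<in> E"
  shows "fk_rate E p \<eta> (flipE \<eta> e) = (if e \<in> \<eta> then 1 - p else if gamma \<eta> e then p else p / 2)"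
proof -
  let ?g = "\<lambda>e'. if flipE \<eta> e = flipE \<eta> e' then (if e' \<in> \<eta> then 1 - p else if gamma \<eta> e' then p else p / 2) else 0"
  have "fk_rate E p \<eta> (flipE \<eta> e) = ?g e + (\<Sum>e'\<in>E - {e}. ?g e')"
    unfolding fk_rate_def by (rule sum.remove[OF finite_E[OF G] e])
  also have "(\<Sum>e'\<in>E - {e}. ?g e') = 0"
    by (intro sum.neutral ballI) (auto dest: flipE_inj)
  finally show ?thesis by simp
qed

lemma fk_none: "\<forall>e\<in>E. \<eta>' \<noteq> flipE \<eta> e \<Longrightarrow> fk_rate E p \<eta> \<eta>' = 0"
  unfolding fk_rate_def by simp

lemma finite_spins: "finite V \<Longrightarrow> finite (spins V)"
  unfolding spins_def by (rule finite_PiE) auto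

lemma finite_CS: "graph V E \<Longrightarrow> finite (CS V E)"
  by (rule finite_subset[of _ "Pow E \<times> spins V"])
     (auto simp: CS_def finite_E finite_spins graph_def)

lemma sum_snd_delta:
  assumes "finite F" "\<forall>s\<in>F. fst s = b"
  shows "(\<Sum>s\<in>F. if snd s = \<tau> then K else 0) = (if (b, \<tau>) \<in> F then K else (0::real))"
proof -
  have "(\<Sum>s\<in>F. if snd s = \<tau> then K else 0) = (\<Sum>s\<in>F. if s = (b, \<tau>) then K else 0)"
    using assms(2) by (intro sum.cong refl) (auto simp: prod_eq_iff)
  also have "\<dots> = (if (b, \<tau>) \<in> F then K else 0)" using assms(1) by (simp add: sum.delta)
  finally show ?thesis .
qed

lemma offdiag:
  assumes G: "graph V E" and c: "(\<eta>, \<sigma>) \<in> CS V E" and b: "b \<in> Pow E" "b \<noteq> \<eta>"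
  shows "(\<Sum>s\<in>{s\<in>CS V E. fst s = b}. crate V E p (\<eta>, \<sigma>) s) = fk_rate E p \<eta> b"
proof (cases "\<exists>e\<in>E. b = flipE \<eta> e")
  case False
  then show ?thesis by (simp add: crate_none fk_none)
next
  case True
  then obtain e where e: "e \<in> E" "b = flipE \<eta> e" by blast
  obtain u w where uw: "u \<in> V" "w \<in> V" "u \<noteq> w" "e = {u, w}" using graph_edge[OF G e(1)] by blast
  let ?F = "{s\<in>CS V E. fst s = b}"
  let ?g = "conn (\<eta> - {{u, w}}) u w"
  let ?A = "{u, w} \<in> \<eta>"
  let ?fr = "frate p \<eta> {u, w}"
  let ?Aterm = "(if ?g then ?fr else 0) + (if \<not> ?g \<and> \<sigma> u = \<sigma> w then 1/2 * ?fr else 0)"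
  let ?B = "if \<not> ?g \<and> (?A \<longleftrightarrow> \<sigma> u = \<sigma> w) then 1/4 * ((1 - p) * of_bool ?A + p * of_bool (\<not> ?A)) else 0"
  have fin: "finite ?F" using finite_CS[OF G] by simp
  have sd: "(\<Sum>s\<in>?F. if snd s = \<tau> then K else 0) = (if (b, \<tau>) \<in> ?F then K else 0)" for \<tau> and K :: real
  proof -
    have "\<forall>s\<in>?F. fst s = b" by auto
    from sum_snd_delta[OF fin this] show ?thesis .
  qed
  have pt: "crate V E p (\<eta>, \<sigma>) s = (if snd s = \<sigma> then ?Aterm else 0)
      + (if snd s = flipcl \<eta> {u, w} u \<sigma> then ?B else 0) + (if snd s = flipcl \<eta> {u, w} w \<sigma> then ?B else 0)"
    if s: "s \<in> ?F" for s
  proof -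
    obtain \<sigma>' where s': "s = (flipE \<eta> {u, w}, \<sigma>')" using s e uw by (cases s) auto
    have sCS: "(flipE \<eta> {u, w}, \<sigma>') \<in> CS V E" using s unfolding s' by auto
    have cr: "crate V E p (\<eta>, \<sigma>) (flipE \<eta> {u, w}, \<sigma>') = cterm V E p (\<eta>, \<sigma>) (flipE \<eta> {u, w}, \<sigma>') {u, w}"
      using crate_single[OF G e(1)] s' uw by simp
    show ?thesis
      apply (unfold s' snd_conv)
      apply (unfold cr cterm_uw[OF uw(3)])
      apply (simp only: c sCS of_bool_eq(2) mult_1_right simp_thms uw(1) uw(2))
      by simp
  qed
  have "(\<Sum>s\<in>?F. crate V E p (\<eta>, \<sigma>) s) =
     (\<Sum>s\<in>?F. if snd s = \<sigma> then ?Aterm else 0) + (\<Sum>s\<in>?F. if snd s = flipcl \<eta> {u, w} u \<sigma> then ?B else 0)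
     + (\<Sum>s\<in>?F. if snd s = flipcl \<eta> {u, w} w \<sigma> then ?B else 0)"
    by (simp add: pt sum.distrib)
  also have "\<dots> = (if (b, \<sigma>) \<in> ?F then ?Aterm else 0) + (if (b, flipcl \<eta> {u, w} u \<sigma>) \<in> ?F then ?B else 0)
     + (if (b, flipcl \<eta> {u, w} w \<sigma>) \<in> ?F then ?B else 0)"
    by (simp only: sd)
  also have "\<dots> = fk_rate E p \<eta> b"
  proof -
    have fk: "fk_rate E p \<eta> b = (if ?A then 1 - p else if ?g then p else p / 2)"
    proof -
      have fk0: "fk_rate E p \<eta> b = (if e \<in> \<eta> then 1 - p else if gamma \<eta> e then p else p / 2)"
        using fk_single[OF G e(1)] e(2) by simp
      then show ?thesis unfolding uw(4) gamma_uw .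
    qed
    have sig: "\<sigma> \<in> spins V" and eta: "\<eta> \<subseteq> E" and dl: "\<forall>f\<in>\<eta>. delta \<sigma> f" using c by (auto simp: CS_iff)
    have eE: "{u, w} \<in> E" using e uw by simp
    show ?thesis
    proof (cases ?A)
      case True
      then have d: "\<sigma> u = \<sigma> w" using dl by auto
      have bb: "b = \<eta> - {{u, w}}" using e uw True by (simp add: flipE_def)
      have "(b, \<sigma>) \<in> CS V E" using CS_remove[OF c] bb by simp
      moreover have "(b, flipcl \<eta> {u, w} x \<sigma>) \<in> CS V E" if "x \<in> V" for x
        using CS_remove_fl[OF G c that] bb by simp
      ultimately show ?thesis using True d fk uw by (simp add: frate_def field_simps)
    next
      case False
      have bb: "b = insert {u, w} \<eta>" using e uw False by (simp add: flipE_def)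
      show ?thesis
      proof (cases ?g)
        case True
        then have d: "\<sigma> u = \<sigma> w" using conn_const[OF True] dl by auto
        then have "(b, \<sigma>) \<in> CS V E" using CS_add[OF c eE] bb by simp
        then show ?thesis using True False d fk by (simp add: frate_def)
      next
        case ng: False
        show ?thesis
        proof (cases "\<sigma> u = \<sigma> w")
          case True
          then have "(b, \<sigma>) \<in> CS V E" using CS_add[OF c eE] bb by simp
          then show ?thesis using True False ng fk by (simp add: frate_def)
        next
          case nd: False
          have 1: "(b, flipcl \<eta> {u, w} u \<sigma>) \<in> CS V E"
            using CS_add_fl[OF G c eE False ng nd] bb by simp
          have ng': "\<not> conn (\<eta> - {{w, u}}) w u" using ng conn_sym by (metis insert_commute)
          have "(insert {w, u} \<eta>, flipcl \<eta> {w, u} w \<sigma>) \<in> CS V E"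
            using CS_add_fl[OF G c _ _ ng'] eE False nd by (simp add: insert_commute)
          then have 2: "(b, flipcl \<eta> {u, w} w \<sigma>) \<in> CS V E" using bb by (simp add: insert_commute)
          show ?thesis using 1 2 nd ng False fk by (simp add: frate_def field_simps)
        qed
      qed
    qed
  qed
  finally show ?thesis .
qed

lemma lump_cond:
  assumes G: "graph V E" and c: "c \<in> CS V E" and b: "b \<in> Pow E"
  shows "(\<Sum>s\<in>{s\<in>CS V E. fst s = b}. gen (CS V E) (crate V E p) c s) = gen (Pow E) (fk_rate E p) (fst c) b"
proof (cases "b = fst c")
  case False
  have "(\<Sum>s\<in>{s\<in>CS V E. fst s = b}. gen (CS V E) (crate V E p) c s)
      = (\<Sum>s\<in>{s\<in>CS V E. fst s = b}. crate V E p c s)"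
    using False by (intro sum.cong refl) (auto simp: gen_def)
  also have "\<dots> = fk_rate E p (fst c) b" using offdiag[OF G, of "fst c" "snd c"] c b False by simp
  finally show ?thesis using False by (simp add: gen_def)
next
  case True
  let ?F = "{s\<in>CS V E. fst s = b}"
  have fin: "finite (CS V E)" by (rule finite_CS[OF G])
  have z: "crate V E p c s = 0" if "fst s = fst c" for s
    by (intro crate_none ballI) (metis flipE_neq that)
  have "(\<Sum>s\<in>?F. gen (CS V E) (crate V E p) c s) = gen (CS V E) (crate V E p) c c
      + (\<Sum>s\<in>?F - {c}. gen (CS V E) (crate V E p) c s)"
    using c True fin by (intro sum.remove) auto
  also have "(\<Sum>s\<in>?F - {c}. gen (CS V E) (crate V E p) c s) = 0"
    using True z by (intro sum.neutral) (auto simp: gen_def)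
  also have "gen (CS V E) (crate V E p) c c = - (\<Sum>s\<in>CS V E - {c}. crate V E p c s)"
    by (simp add: gen_def)
  also have "(\<Sum>s\<in>CS V E - {c}. crate V E p c s)
      = (\<Sum>b'\<in>Pow E. \<Sum>s\<in>{s\<in>CS V E - {c}. fst s = b'}. crate V E p c s)"
    by (rule sum.group[symmetric]) (use fin finite_E[OF G] in \<open>auto simp: CS_def\<close>)
  also have "\<dots> = (\<Sum>b'\<in>Pow E. if b' = fst c then 0 else fk_rate E p (fst c) b')"
  proof (intro sum.cong refl)
    fix b' assume b': "b' \<in> Pow E"
    show "(\<Sum>s\<in>{s\<in>CS V E - {c}. fst s = b'}. crate V E p c s) = (if b' = fst c then 0 else fk_rate E p (fst c) b')"
    proof (cases "b' = fst c")
      case True then show ?thesis using z by simp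
    next
      case False
      then have "{s\<in>CS V E - {c}. fst s = b'} = {s\<in>CS V E. fst s = b'}" by auto
      then show ?thesis using offdiag[OF G, of "fst c" "snd c" b' p] c b' False by simp
    qed
  qed
  also have "\<dots> = (\<Sum>b'\<in>Pow E - {fst c}. fk_rate E p (fst c) b')"
    using finite_E[OF G] by (simp add: sum.If_cases Diff_eq)
  finally show ?thesis using True by (simp add: gen_def)
qed

lemma edge_marginal:
  assumes G: "graph V E"
  shows "marginal_mjp_with (CS V E) (gen (CS V E) (crate V E p)) fst (Pow E) (fk_rate E p)"
proof -
  interpret lumpable "CS V E" "Pow E" fst "gen (CS V E) (crate V E p)" "gen (Pow E) (fk_rate E p)"
  proof
    show "finite (CS V E)" by (rule finite_CS[OF G])
    show "finite (Pow E)" using finite_E[OF G] by simp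
    show "fst ` CS V E \<subseteq> Pow E" by (auto simp: CS_def)
  qed (rule lump_cond[OF G], auto)
  show ?thesis unfolding marginal_mjp_with_def using lump_fdd by blast
qed


lemma powser_c1:
  fixes c :: "nat \<Rightarrow> real"
  assumes sm: "\<And>y. summable (\<lambda>n. c n * y ^ n)" and z: "\<And>t. t \<ge> 0 \<Longrightarrow> (\<Sum>n. c n * t ^ n) = 0"
  shows "c 1 = 0"
proof -
  define g where "g = (\<lambda>x::real. \<Sum>n. c n * x ^ n)"
  have D: "(g has_field_derivative (\<Sum>n. diffs c n * 0 ^ n)) (at 0)"
    unfolding g_def by (rule termdiffs_strong_converges_everywhere[OF sm])
  have "(\<Sum>n. diffs c n * 0 ^ n) = diffs c 0" by (rule powser_zero)
  also have "diffs c 0 = c 1" unfolding diffs_def by simp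
  finally have D1: "(g has_field_derivative c 1) (at 0)" using D by simp
  have D2: "(g has_field_derivative c 1) (at 0 within {0<..})"
    by (rule has_field_derivative_at_within[OF D1])
  have L: "((\<lambda>y. (g y - g 0) / (y - 0)) \<longlongrightarrow> c 1) (at_right 0)"
    using D2 by (simp only: has_field_derivative_iff)
  have g0: "g y = 0" if "y \<ge> 0" for y unfolding g_def by (rule z[OF that])
  have "\<forall>\<^sub>F y in at_right (0::real). (g y - g 0) / (y - 0) = 0"
    using eventually_at_right_less[of "0::real"] by eventually_elim (simp add: g0)
  then have L2: "((\<lambda>y. (g y - g 0) / (y - 0)) \<longlongrightarrow> 0) (at_right 0)"
    by (rule tendsto_eventually)
  show ?thesis using tendsto_unique[OF _ L L2] by simp
qed

lemma marg_single:
  assumes S: "finite S" and z: "z \<in> S"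
  shows "marg_fdd S Q f (\<lambda>x. if x = z then 1 else 0) [(t, y)] = (\<Sum>x\<in>{x\<in>S. f x = y}. trans S Q t z x)"
proof -
  have set: "{xs. length xs = length [(t, y)] \<and> set xs \<subseteq> S \<and> map f xs = map snd [(t, y)]}
      = (\<lambda>x. [x]) ` {x\<in>S. f x = y}"
    by (auto simp: length_Suc_conv)
  have inj: "inj_on (\<lambda>x. [x]) {x\<in>S. f x = y}" by (auto simp: inj_on_def)
  have fdd: "fdd S Q (\<lambda>x. if x = z then 1 else 0) [(t, x)] = trans S Q t z x" for x
  proof -
    have "fdd S Q (\<lambda>x. if x = z then 1 else 0) [(t, x)] = (\<Sum>z'\<in>S. if z' = z then trans S Q t z' x else 0)"
      unfolding fdd_def by (rule sum.cong) auto
    also have "\<dots> = trans S Q t z x" using S z by (simp add: sum.delta')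
    finally show ?thesis .
  qed
  show ?thesis unfolding marg_fdd_def set sum.reindex[OF inj] by (simp add: fdd)
qed

lemma trans_diff_powser:
  fixes Q :: "'a \<Rightarrow> 'a \<Rightarrow> real" and a b :: 'a
  assumes S: "finite S" and F: "F \<subseteq> S"
  defines "c \<equiv> \<lambda>n. (\<Sum>x\<in>F. qpow S Q n a x - qpow S Q n b x) / fact n"
  shows "summable (\<lambda>n. c n * t ^ n)"
    and "(\<Sum>n. c n * t ^ n) = (\<Sum>x\<in>F. trans S Q t a x) - (\<Sum>x\<in>F. trans S Q t b x)"
proof -
  have fin: "finite F" using S F by (rule rev_finite_subset)
  have eq: "c n * t ^ n = (\<Sum>x\<in>F. t ^ n / fact n * qpow S Q n a x) - (\<Sum>x\<in>F. t ^ n / fact n * qpow S Q n b x)" for n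
  proof -
    have 1: "(\<Sum>x\<in>F. t ^ n / fact n * qpow S Q n a x) - (\<Sum>x\<in>F. t ^ n / fact n * qpow S Q n b x)
        = t ^ n / fact n * ((\<Sum>x\<in>F. qpow S Q n a x) - (\<Sum>x\<in>F. qpow S Q n b x))"
      by (simp only: sum_distrib_left[symmetric] right_diff_distrib)
    have 2: "c n = ((\<Sum>x\<in>F. qpow S Q n a x) - (\<Sum>x\<in>F. qpow S Q n b x)) / fact n"
      unfolding c_def by (simp only: sum_subtractf)
    show ?thesis unfolding 1 2 by simp
  qed
  have sa: "summable (\<lambda>n. \<Sum>x\<in>F. t ^ n / fact n * qpow S Q n a x)"
    apply (rule summable_sum) apply (rule trans_summable[OF S]) using F by auto
  have sb: "summable (\<lambda>n. \<Sum>x\<in>F. t ^ n / fact n * qpow S Q n b x)"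
    apply (rule summable_sum) apply (rule trans_summable[OF S]) using F by auto
  show "summable (\<lambda>n. c n * t ^ n)" unfolding eq by (rule summable_diff[OF sa sb])
  have "(\<Sum>n. c n * t ^ n) = (\<Sum>n. \<Sum>x\<in>F. t ^ n / fact n * qpow S Q n a x) - (\<Sum>n. \<Sum>x\<in>F. t ^ n / fact n * qpow S Q n b x)"
    unfolding eq by (rule suminf_diff[OF sa sb, symmetric])
  also have "\<dots> = (\<Sum>x\<in>F. trans S Q t a x) - (\<Sum>x\<in>F. trans S Q t b x)"
  proof -
    have "(\<Sum>n. \<Sum>x\<in>F. t ^ n / fact n * qpow S Q n a x) = (\<Sum>x\<in>F. trans S Q t a x)"
      unfolding trans_def apply (rule suminf_sum) apply (rule trans_summable[OF S]) using F by auto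
    moreover have "(\<Sum>n. \<Sum>x\<in>F. t ^ n / fact n * qpow S Q n b x) = (\<Sum>x\<in>F. trans S Q t b x)"
      unfolding trans_def apply (rule suminf_sum) apply (rule trans_summable[OF S]) using F by auto
    ultimately show ?thesis by simp
  qed
  finally show "(\<Sum>n. c n * t ^ n) = (\<Sum>x\<in>F. trans S Q t a x) - (\<Sum>x\<in>F. trans S Q t b x)" .
qed

lemma qpow_one:
  assumes "finite S" "a \<in> S" shows "qpow S Q 1 a x = Q a x"
proof -
  have "qpow S Q 1 a x = (\<Sum>c\<in>S. if a = c then Q c x else 0)"
    by (simp, rule sum.cong) auto
  also have "\<dots> = Q a x" using assms by (simp add: sum.delta)
  finally show ?thesis .
qed

lemma cterm_nonneg:
  assumes "0 \<le> p" "p \<le> 1" shows "0 \<le> cterm V E p s s' e"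
proof -
  have fr: "0 \<le> frate p \<eta> f" for \<eta> f using assms by (simp add: frate_def)
  have i: "\<And>C K. 0 \<le> K \<Longrightarrow> 0 \<le> (if C then K else (0::real))" by simp
  show ?thesis
    apply (unfold cterm_def Let_def)
    apply (intro add_nonneg_nonneg sum_nonneg i mult_nonneg_nonneg fr)
    using assms by simp_all
qed

lemma crate_nonneg: "0 \<le> p \<Longrightarrow> p \<le> 1 \<Longrightarrow> 0 \<le> crate V E p s s'"
  unfolding crate_cterm by (intro sum_nonneg cterm_nonneg)

lemma spin_not_mjp:
  assumes G: "graph V E" and E: "E \<noteq> {}" and p: "0 < p" "p < 1"
  shows "\<not> marginal_is_mjp (CS V E) (gen (CS V E) (crate V E p)) snd (spins V)"
proof
  assume "marginal_is_mjp (CS V E) (gen (CS V E) (crate V E p)) snd (spins V)"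
  then obtain r where H: "marginal_mjp_with (CS V E) (gen (CS V E) (crate V E p)) snd (spins V) r"
    unfolding marginal_is_mjp_def by blast
  let ?S = "CS V E"
  let ?Q = "gen (CS V E) (crate V E p)"
  obtain e where e: "e \<in> E" using E by blast
  obtain u w where uw: "u \<in> V" "w \<in> V" "u \<noteq> w" "e = {u, w}" using graph_edge[OF G e] by blast
  define \<sigma>0 :: "'a \<Rightarrow> int" where "\<sigma>0 = restrict (\<lambda>_. 1) V"
  have s0: "\<sigma>0 \<in> spins V" by (simp add: \<sigma>0_def spins_def)
  have s0v: "\<sigma>0 x = 1" if "x \<in> V" for x using that by (simp add: \<sigma>0_def)
  have dl0: "delta \<sigma>0 f" if "f \<in> E" for f
  proof -
    have "f \<subseteq> V" by (rule graph_E_sub[OF G that])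
    then show ?thesis unfolding delta_def using s0v by (metis subsetD)
  qed
  define z1 where "z1 = ({} :: 'a set set, \<sigma>0)"
  define z2 where "z2 = ({e}, \<sigma>0)"
  have z1S: "z1 \<in> ?S" using s0 by (simp add: z1_def CS_iff)
  have z2S: "z2 \<in> ?S" using s0 e dl0 by (simp add: z2_def CS_iff)
  define y where "y = flipcl {e} e u \<sigma>0"
  have yS: "y \<in> spins V" unfolding y_def by (rule flipcl_spins[OF G _ s0 uw(1)]) (use e in auto)
  have yu: "y u = -1" by (simp add: y_def flipcl_def s0v uw(1))
  have yne: "y \<noteq> \<sigma>0" using yu s0v[OF uw(1)] by auto
  have fin: "finite ?S" by (rule finite_CS[OF G])
  let ?F = "{x\<in>?S. snd x = y}"
  define \<mu>1 where "\<mu>1 = (\<lambda>x. if x = z1 then 1 else (0::real))"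
  define \<mu>2 where "\<mu>2 = (\<lambda>x. if x = z2 then 1 else (0::real))"
  have d1: "distr ?S \<mu>1" using fin z1S by (simp add: distr_def \<mu>1_def sum.delta)
  have d2: "distr ?S \<mu>2" using fin z2S by (simp add: distr_def \<mu>2_def sum.delta)
  have snd12: "snd z1 = snd z2" by (simp add: z1_def z2_def)
  have pz: "push ?S snd (\<lambda>x. if x = z then 1 else 0) y' = (if snd z = y' then 1 else (0::real))"
    if zS: "z \<in> ?S" for z y'
  proof -
    have "push ?S snd (\<lambda>x. if x = z then 1 else 0) y' = (\<Sum>x\<in>{x\<in>?S. snd x = y'}. if x = z then 1 else (0::real))"
      by (simp only: push_def)
    also have "\<dots> = (if z \<in> {x\<in>?S. snd x = y'} then 1 else 0)"
      by (rule sum.delta) (use fin in simp)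
    finally show ?thesis using zS by simp
  qed
  have push: "push ?S snd \<mu>1 = push ?S snd \<mu>2"
    unfolding \<mu>1_def \<mu>2_def by (rule ext) (simp only: pz[OF z1S] pz[OF z2S] snd12)
  have eqt: "(\<Sum>x\<in>?F. trans ?S ?Q t z1 x) = (\<Sum>x\<in>?F. trans ?S ?Q t z2 x)" if t: "t \<ge> 0" for t
  proof -
    have Hs: "marg_fdd ?S ?Q snd \<mu> obs = fdd (spins V) (gen (spins V) r) (push ?S snd \<mu>) obs"
      if "distr ?S \<mu>" "valid_times obs" "set (map snd obs) \<subseteq> spins V" for \<mu> obs
      using H that unfolding marginal_mjp_with_def by blast
    have vt: "valid_times [(t, y)]" using t by (simp add: valid_times_def)
    have st: "set (map snd [(t, y)]) \<subseteq> spins V" using yS by simp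
    have "(\<Sum>x\<in>?F. trans ?S ?Q t z1 x) = marg_fdd ?S ?Q snd \<mu>1 [(t, y)]"
      unfolding \<mu>1_def by (rule marg_single[OF fin z1S, symmetric])
    also have "\<dots> = fdd (spins V) (gen (spins V) r) (push ?S snd \<mu>1) [(t, y)]"
      by (rule Hs[OF d1 vt st])
    also have "\<dots> = fdd (spins V) (gen (spins V) r) (push ?S snd \<mu>2) [(t, y)]" by (simp only: push)
    also have "\<dots> = marg_fdd ?S ?Q snd \<mu>2 [(t, y)]"
      by (rule Hs[OF d2 vt st, symmetric])
    also have "\<dots> = (\<Sum>x\<in>?F. trans ?S ?Q t z2 x)"
      unfolding \<mu>2_def by (rule marg_single[OF fin z2S])
    finally show ?thesis .
  qed
  define c where "c = (\<lambda>n. (\<Sum>x\<in>?F. qpow ?S ?Q n z1 x - qpow ?S ?Q n z2 x) / fact n)"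
  have FS: "?F \<subseteq> ?S" by auto
  have c1: "c 1 = 0"
  proof (rule powser_c1)
    show "summable (\<lambda>n. c n * t ^ n)" for t
      unfolding c_def by (rule trans_diff_powser(1)[OF fin FS])
    show "(\<Sum>n. c n * t ^ n) = 0" if "t \<ge> 0" for t
      unfolding c_def trans_diff_powser(2)[OF fin FS] using eqt[OF that] by simp
  qed
  have c1': "c 1 = (\<Sum>x\<in>?F. crate V E p z1 x) - (\<Sum>x\<in>?F. crate V E p z2 x)"
  proof -
    have "c 1 = (\<Sum>x\<in>?F. ?Q z1 x - ?Q z2 x)"
      unfolding c_def by (simp only: qpow_one[OF fin z1S] qpow_one[OF fin z2S]) simp
    also have "\<dots> = (\<Sum>x\<in>?F. crate V E p z1 x - crate V E p z2 x)"
    proof (rule sum.cong[OF refl])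
      fix x assume "x \<in> ?F"
      then have "x \<noteq> z1" "x \<noteq> z2" using yne by (auto simp: z1_def z2_def)
      then show "?Q z1 x - ?Q z2 x = crate V E p z1 x - crate V E p z2 x" by (simp add: gen_def)
    qed
    finally show ?thesis by (simp add: sum_subtractf)
  qed
  have zero1: "crate V E p z1 x = 0" if "x \<in> ?F" for x
  proof -
    have "cterm V E p z1 x f = 0" if f: "f \<in> E" for f
    proof -
      obtain \<eta>' where x: "x = (\<eta>', y)" using \<open>x \<in> ?F\<close> by (cases x) auto
      have d: "delta \<sigma>0 f = True" using dl0[OF f] by simp
      have ne: "(y = \<sigma>0) = False" using yne by simp
      show ?thesis unfolding cterm_def Let_def z1_def x fst_conv snd_conv
        by (simp only: d ne empty_iff simp_thms if_False) simp
    qed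
    then show ?thesis unfolding crate_cterm by simp
  qed
  have x0F: "({}, y) \<in> ?F" using yS by (simp add: CS_iff)
  have pos: "crate V E p z2 ({}, y) > 0"
  proof -
    have fl: "flipE {e} e = {}" by (simp add: flipE_def)
    have "crate V E p z2 ({}, y) = cterm V E p z2 ({}, y) e"
      by (rule crate_single[OF G e]) (simp add: z2_def fl)
    then have cr: "crate V E p z2 ({}, y) = cterm V E p ({e}, \<sigma>0) (flipE {e} {u, w}, y) {u, w}"
      by (simp only: z2_def uw(4)[symmetric] fl)
    have nc: "\<not> conn ({e} - {{u, w}}) u w" using uw by simp
    have A: "{u, w} \<in> {e}" using uw by simp
    have D: "\<sigma>0 u = \<sigma>0 w" using s0v uw by simp
    have Y: "y = flipcl {e} {u, w} u \<sigma>0" using y_def uw by simp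
    have C1: "({e}, \<sigma>0) \<in> CS V E" using z2S by (simp add: z2_def)
    have Y4: "y \<noteq> flipcl {e} {u, w} w \<sigma>0"
    proof
      assume "y = flipcl {e} {u, w} w \<sigma>0"
      then have "y u = flipcl {e} {u, w} w \<sigma>0 u" by simp
      moreover have "flipcl {e} {u, w} w \<sigma>0 u = 1" using uw s0v by (simp add: flipcl_def)
      ultimately show False using yu by simp
    qed
    have Y': "(y = flipcl {e} {u, w} u \<sigma>0) = True" using Y by simp
    have val: "cterm V E p ({e}, \<sigma>0) (flipE {e} {u, w}, y) {u, w} = 1/4 * (1 - p)"
      unfolding cterm_uw[OF uw(3)]
      apply (simp only: yne Y4 Y' nc A D C1 uw(1) uw(2) simp_thms if_True if_False of_bool_eq)
      by (simp only: mult_zero_left mult_zero_right mult_1_right add_0_left add_0_right)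
    show ?thesis using cr val p by simp
  qed
  have "(\<Sum>x\<in>?F. crate V E p z2 x) \<ge> crate V E p z2 ({}, y)"
    by (rule member_le_sum[OF x0F _ finite_subset[OF FS fin]]) (rule crate_nonneg, use p in auto)
  moreover have "(\<Sum>x\<in>?F. crate V E p z1 x) = 0" using zero1 by simp
  ultimately show False using c1 c1' pos by linarith
qed


theorem theorem5:
  fixes V :: "'v set" and E :: "'v set set" and p :: real
  assumes "graph V E" and "E \<noteq> {}" and "0 < p" and "p < 1"
  shows "reversible (CS V E) (IP V E p) (crate V E p)
       \<and> marginal_mjp_with (CS V E) (gen (CS V E) (crate V E p)) fst (Pow E) (fk_rate E p)
       \<and> \<not> marginal_is_mjp (CS V E) (gen (CS V E) (crate V E p)) snd (spins V)"
  using reversible_part[OF assms(1)] edge_marginal[OF assms(1)] spin_not_mjp[OF assms] by blast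

end
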